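(* Let $p\in(1,\infty)$, $q=p/(p-1)$, $R_0\in\mathbb{R}^{\mathcal{S}\times\mathcal{A}}$, $\alpha>0$ and $\mathcal{R}_p=\{R:\|R-R_0\|_p\le\alpha\}$. Fix a stationary policy $\pi\in\Pi$ and define the operator on $\mathbb{R}^{\mathcal{S}}$ $$[\mathcal{T}^{\pi,\mathrm{reg}}_{\mathcal{R}_p}v](s)=(\mathcal{T}^\pi_{R_0}v)(s)-\alpha\,\frac{\sum_a\pi_s(a)\,d^\pi(s,a)^{q-1}}{\|d^\pi\|_q^{q-1}},\qquad s\in\mathcal{S}.$$ Then for any $v_0\in\mathbb{R}^{\mathcal{S}}$ the sequence $v_{n+1}=\mathcal{T}^{\pi,\mathrm{reg}}_{\mathcal{R}_p}v_n$ converges linearly to the robust value function $v^\pi_{\mathcal{R}_p}$.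
   Context: Finite MDP with finite state space $\mathcal{S}$, finite action space $\mathcal{A}$, transition kernel $P$, discount $\gamma\in[0,1)$, initial distribution $\mu$ with $\mu(s)>0$ for all $s$. $\Pi$: stationary randomized policies, $\pi_s(a)=\pi(a|s)$; $R^\pi(s)=\sum_a\pi_s(a)R(s,a)$, $P^\pi(s'|s)=\sum_a\pi_s(a)P(s'|s,a)$; $(\mathcal{T}^\pi_Rv)(s)=R^\pi(s)+\gamma\sum_{s'}P^\pi(s'|s)v(s')$; $v^\pi_R=(I-\gamma P^\pi)^{-1}R^\pi$. Occupancy: $d^\pi=\mu^\top(I-\gamma P^\pi)^{-1}$, $d^\pi(s,a)=d^\pi(s)\pi_s(a)$, $\|d^\pi\|_q$ the $L_q$ norm over $\mathcal{S}\times\mathcal{A}$. Return $\rho^\pi_R=\sum_{s,a}d^\pi(s,a)R(s,a)$. The worst-case reward $R^\pi_p$ is the (unique) minimizer of $R\mapsto\rho^\pi_R$ over $\mathcal{R}_p$, and the robust value function is $v^\pi_{\mathcal{R}_p}:=v^\pi_{R^\pi_p}$. *)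

theory Defs
  imports "HOL-Analysis.Analysis"
begin

(* Finite MDP: states 's::finite, actions 'a::finite.
   P s a s' = P(s'|s,a);  pol s a = pi(a|s);  rewards R s a. *)

definition reward_pol :: "('s::finite \<Rightarrow> 'a::finite \<Rightarrow> real) \<Rightarrow> ('s \<Rightarrow> 'a \<Rightarrow> real) \<Rightarrow> real^'s" where
  "reward_pol pol R = (\<chi> s. \<Sum>a\<in>UNIV. pol s a * R s a)"

definition trans_pol :: "('s::finite \<Rightarrow> 'a::finite \<Rightarrow> real) \<Rightarrow> ('s \<Rightarrow> 'a \<Rightarrow> 's \<Rightarrow> real) \<Rightarrow> real^'s^'s" where
  "trans_pol pol P = (\<chi> s s'. \<Sum>a\<in>UNIV. pol s a * P s a s')"

definition bellman :: "real \<Rightarrow> ('s::finite \<Rightarrow> 'a::finite \<Rightarrow> 's \<Rightarrow> real) \<Rightarrow> ('s \<Rightarrow> 'a \<Rightarrow> real)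
    \<Rightarrow> ('s \<Rightarrow> 'a \<Rightarrow> real) \<Rightarrow> real^'s \<Rightarrow> real^'s" where
  "bellman \<gamma> P pol R v = reward_pol pol R + \<gamma> *\<^sub>R (trans_pol pol P *v v)"

definition value_fun :: "real \<Rightarrow> ('s::finite \<Rightarrow> 'a::finite \<Rightarrow> 's \<Rightarrow> real) \<Rightarrow> ('s \<Rightarrow> 'a \<Rightarrow> real)
    \<Rightarrow> ('s \<Rightarrow> 'a \<Rightarrow> real) \<Rightarrow> real^'s" where
  "value_fun \<gamma> P pol R = matrix_inv (mat 1 - \<gamma> *\<^sub>R trans_pol pol P) *v reward_pol pol R"

definition occ_state :: "real \<Rightarrow> ('s::finite \<Rightarrow> 'a::finite \<Rightarrow> 's \<Rightarrow> real) \<Rightarrow> ('s \<Rightarrow> real)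
    \<Rightarrow> ('s \<Rightarrow> 'a \<Rightarrow> real) \<Rightarrow> real^'s" where
  "occ_state \<gamma> P \<mu> pol = (\<chi> s. \<mu> s) v* matrix_inv (mat 1 - \<gamma> *\<^sub>R trans_pol pol P)"

definition occ :: "real \<Rightarrow> ('s::finite \<Rightarrow> 'a::finite \<Rightarrow> 's \<Rightarrow> real) \<Rightarrow> ('s \<Rightarrow> real)
    \<Rightarrow> ('s \<Rightarrow> 'a \<Rightarrow> real) \<Rightarrow> 's \<Rightarrow> 'a \<Rightarrow> real" where
  "occ \<gamma> P \<mu> pol s a = occ_state \<gamma> P \<mu> pol $ s * pol s a"

definition ret :: "real \<Rightarrow> ('s::finite \<Rightarrow> 'a::finite \<Rightarrow> 's \<Rightarrow> real) \<Rightarrow> ('s \<Rightarrow> real)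
    \<Rightarrow> ('s \<Rightarrow> 'a \<Rightarrow> real) \<Rightarrow> ('s \<Rightarrow> 'a \<Rightarrow> real) \<Rightarrow> real" where
  "ret \<gamma> P \<mu> pol R = (\<Sum>s\<in>UNIV. \<Sum>a\<in>UNIV. occ \<gamma> P \<mu> pol s a * R s a)"

definition lpnorm :: "real \<Rightarrow> ('s::finite \<Rightarrow> 'a::finite \<Rightarrow> real) \<Rightarrow> real" where
  "lpnorm p f = (\<Sum>s\<in>UNIV. \<Sum>a\<in>UNIV. \<bar>f s a\<bar> powr p) powr (1 / p)"

definition Rball :: "real \<Rightarrow> ('s::finite \<Rightarrow> 'a::finite \<Rightarrow> real) \<Rightarrow> real \<Rightarrow> ('s \<Rightarrow> 'a \<Rightarrow> real) set" where
  "Rball p R0 \<alpha> = {R. lpnorm p (\<lambda>s a. R s a - R0 s a) \<le> \<alpha>}"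

(* worst-case reward: the (unique) minimizer of R |-> rho^pi_R over R_p *)
definition worst_reward :: "real \<Rightarrow> ('s::finite \<Rightarrow> 'a::finite \<Rightarrow> 's \<Rightarrow> real) \<Rightarrow> ('s \<Rightarrow> real)
    \<Rightarrow> ('s \<Rightarrow> 'a \<Rightarrow> real) \<Rightarrow> real \<Rightarrow> ('s \<Rightarrow> 'a \<Rightarrow> real) \<Rightarrow> real \<Rightarrow> ('s \<Rightarrow> 'a \<Rightarrow> real)" where
  "worst_reward \<gamma> P \<mu> pol p R0 \<alpha> =
     (THE R. R \<in> Rball p R0 \<alpha> \<and> (\<forall>R'\<in>Rball p R0 \<alpha>. ret \<gamma> P \<mu> pol R \<le> ret \<gamma> P \<mu> pol R'))"

definition robust_value :: "real \<Rightarrow> ('s::finite \<Rightarrow> 'a::finite \<Rightarrow> 's \<Rightarrow> real) \<Rightarrow> ('s \<Rightarrow> real)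
    \<Rightarrow> ('s \<Rightarrow> 'a \<Rightarrow> real) \<Rightarrow> real \<Rightarrow> ('s \<Rightarrow> 'a \<Rightarrow> real) \<Rightarrow> real \<Rightarrow> real^'s" where
  "robust_value \<gamma> P \<mu> pol p R0 \<alpha> = value_fun \<gamma> P pol (worst_reward \<gamma> P \<mu> pol p R0 \<alpha>)"

definition reg_bellman :: "real \<Rightarrow> ('s::finite \<Rightarrow> 'a::finite \<Rightarrow> 's \<Rightarrow> real) \<Rightarrow> ('s \<Rightarrow> real)
    \<Rightarrow> ('s \<Rightarrow> 'a \<Rightarrow> real) \<Rightarrow> real \<Rightarrow> ('s \<Rightarrow> 'a \<Rightarrow> real) \<Rightarrow> real \<Rightarrow> real^'s \<Rightarrow> real^'s" where
  "reg_bellman \<gamma> P \<mu> pol p R0 \<alpha> v =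
     (let q = p / (p - 1); d = occ \<gamma> P \<mu> pol in
      bellman \<gamma> P pol R0 v -
      (\<chi> s. \<alpha> * (\<Sum>a\<in>UNIV. pol s a * d s a powr (q - 1)) / lpnorm q d powr (q - 1)))"

definition supnorm :: "real^'s::finite \<Rightarrow> real" where
  "supnorm v = Max (range (\<lambda>s. \<bar>v $ s\<bar>))"

end

theory Submission
  imports Defs
begin


lemma supnorm_ge: "\<bar>x $ s\<bar> \<le> supnorm x"
  unfolding supnorm_def by (rule Max_ge) auto

lemma supnorm_le: "(\<And>s. \<bar>x $ s\<bar> \<le> c) \<Longrightarrow> supnorm x \<le> c"
  unfolding supnorm_def by (subst Max_le_iff) auto

lemma supnorm_nonneg: "0 \<le> supnorm x"
  using supnorm_ge[of x] abs_ge_zero order_trans by blast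

lemma supnorm_zero: "supnorm x = 0 \<Longrightarrow> x = 0"
  using supnorm_ge[of x] by (force simp: vec_eq_iff)

lemma matrix_inv_props:
  assumes "invertible A"
  shows "A ** matrix_inv A = mat 1" "matrix_inv A ** A = mat 1"
  using someI_ex[OF assms[unfolded invertible_def]] unfolding matrix_inv_def by auto

locale stoch =
  fixes P :: "'s::finite \<Rightarrow> 'a::finite \<Rightarrow> 's \<Rightarrow> real" and pol :: "'s \<Rightarrow> 'a \<Rightarrow> real" and \<gamma> :: real
    and \<mu> :: "'s \<Rightarrow> real"
  assumes P_nonneg: "\<And>s a s'. P s a s' \<ge> 0"
    and P_sum: "\<And>s a. (\<Sum>s'\<in>UNIV. P s a s') = 1"
    and pol_nonneg: "\<And>s a. pol s a \<ge> 0"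
    and pol_sum: "\<And>s. (\<Sum>a\<in>UNIV. pol s a) = 1"
    and gamma: "0 \<le> \<gamma>" "\<gamma> < 1"
    and mu_pos: "\<And>s. \<mu> s > 0"
begin

abbreviation "T \<equiv> trans_pol pol P"
abbreviation "B \<equiv> mat 1 - \<gamma> *\<^sub>R T"

lemma T_nonneg: "T $ s $ s' \<ge> 0"
  unfolding trans_pol_def using P_nonneg pol_nonneg by (auto intro!: sum_nonneg)

lemma T_sum: "(\<Sum>s'\<in>UNIV. T $ s $ s') = 1"
proof -
  have "(\<Sum>s'\<in>UNIV. T $ s $ s') = (\<Sum>a\<in>UNIV. pol s a * (\<Sum>s'\<in>UNIV. P s a s'))"
    unfolding trans_pol_def by (simp add: sum_distrib_left) (rule sum.swap)
  also have "\<dots> = 1" using P_sum pol_sum by simp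
  finally show ?thesis .
qed

lemma T_bound: "\<bar>(T *v x) $ s\<bar> \<le> supnorm x"
proof -
  have "\<bar>(T *v x) $ s\<bar> = \<bar>\<Sum>s'\<in>UNIV. T $ s $ s' * x $ s'\<bar>"
    by (simp add: matrix_vector_mult_def)
  also have "\<dots> \<le> (\<Sum>s'\<in>UNIV. T $ s $ s' * \<bar>x $ s'\<bar>)"
    by (rule order_trans[OF sum_abs]) (simp add: abs_mult T_nonneg)
  also have "\<dots> \<le> (\<Sum>s'\<in>UNIV. T $ s $ s' * supnorm x)"
    by (intro sum_mono mult_left_mono supnorm_ge T_nonneg)
  also have "\<dots> = supnorm x" by (simp add: sum_distrib_right[symmetric] T_sum)
  finally show ?thesis .
qed

lemma T_contr: "supnorm (\<gamma> *\<^sub>R (T *v x)) \<le> \<gamma> * supnorm x"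
  by (rule supnorm_le) (use gamma T_bound in \<open>auto simp: abs_mult intro: mult_left_mono\<close>)

lemma B_inv: "invertible B"
proof -
  have "\<forall>x. B *v x = 0 \<longrightarrow> x = 0"
  proof safe
    fix x assume "B *v x = 0"
    hence "x = \<gamma> *\<^sub>R (T *v x)"
      by (simp add: matrix_vector_mult_diff_rdistrib scaleR_matrix_vector_assoc)
    hence "supnorm x \<le> \<gamma> * supnorm x" using T_contr by metis
    hence "supnorm x = 0" using supnorm_nonneg[of x] gamma
      by (smt (verit) mult_le_cancel_right1)
    thus "x = 0" by (rule supnorm_zero)
  qed
  thus ?thesis using matrix_left_invertible_ker invertible_left_inverse by blast
qed

lemma value_fix: "bellman \<gamma> P pol R (value_fun \<gamma> P pol R) = value_fun \<gamma> P pol R"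
proof -
  define V where "V = value_fun \<gamma> P pol R"
  have "B *v V = reward_pol pol R"
    unfolding V_def value_fun_def matrix_vector_mul_assoc matrix_inv_props[OF B_inv] by simp
  hence "V - \<gamma> *\<^sub>R (T *v V) = reward_pol pol R"
    by (simp add: matrix_vector_mult_diff_rdistrib scaleR_matrix_vector_assoc)
  thus ?thesis unfolding V_def[symmetric] bellman_def by (simp add: algebra_simps)
qed

lemma bellman_diff: "bellman \<gamma> P pol R x - bellman \<gamma> P pol R y = \<gamma> *\<^sub>R (T *v (x - y))"
  unfolding bellman_def by (simp add: matrix_vector_mult_diff_distrib algebra_simps)

end

context stoch begin

lemma occ_eq: "occ_state \<gamma> P \<mu> pol $ j = \<mu> j + \<gamma> * (\<Sum>i\<in>UNIV. occ_state \<gamma> P \<mu> pol $ i * T $ i $ j)"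
proof -
  define d where "d = occ_state \<gamma> P \<mu> pol"
  have "d v* B = (\<chi> s. \<mu> s)"
    unfolding d_def occ_state_def vector_matrix_mul_assoc matrix_inv_props[OF B_inv] by simp
  hence "(d v* B) $ j = \<mu> j" by simp
  moreover have Bij: "B $ i $ k = (if i = k then 1 else 0) - \<gamma> * T $ i $ k" for i k
    by (simp add: mat_def)
  moreover have "(d v* B) $ j = (\<Sum>i\<in>UNIV. d $ i * (if i = j then 1 else 0)) - \<gamma> * (\<Sum>i\<in>UNIV. d $ i * T $ i $ j)"
    unfolding vector_matrix_mult_def Bij
    by (simp add: right_diff_distrib sum_subtractf sum_distrib_left mult.left_commute del: vector_minus_component)
  ultimately have "d $ j - \<gamma> * (\<Sum>i\<in>UNIV. d $ i * T $ i $ j) = \<mu> j"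
    by (simp add: if_distrib cong: if_cong)
  thus ?thesis unfolding d_def by simp
qed

lemma occ_ge_mu: "occ_state \<gamma> P \<mu> pol $ j \<ge> \<mu> j"
proof -
  define d where "d = occ_state \<gamma> P \<mu> pol"
  have eq: "\<And>j. d $ j = \<mu> j + \<gamma> * (\<Sum>i\<in>UNIV. d $ i * T $ i $ j)"
    unfolding d_def by (rule occ_eq)
  define e where "e j = min (d $ j) 0" for j
  have e1: "e j \<ge> \<gamma> * (\<Sum>i\<in>UNIV. e i * T $ i $ j)" for j
  proof -
    have "(\<Sum>i\<in>UNIV. e i * T $ i $ j) \<le> 0"
      by (intro sum_nonpos) (simp add: e_def T_nonneg mult_nonpos_nonneg)
    hence a: "\<gamma> * (\<Sum>i\<in>UNIV. e i * T $ i $ j) \<le> 0" using gamma by (simp add: mult_nonneg_nonpos)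
    have "(\<Sum>i\<in>UNIV. e i * T $ i $ j) \<le> (\<Sum>i\<in>UNIV. d $ i * T $ i $ j)"
      by (intro sum_mono mult_right_mono) (auto simp: e_def T_nonneg)
    hence "\<gamma> * (\<Sum>i\<in>UNIV. e i * T $ i $ j) \<le> d $ j"
      using eq[of j] mu_pos[of j] gamma by (smt (verit) mult_left_mono)
    thus ?thesis using a by (simp add: e_def)
  qed
  have "(\<Sum>j\<in>UNIV. e j) \<ge> (\<Sum>j\<in>UNIV. \<gamma> * (\<Sum>i\<in>UNIV. e i * T $ i $ j))"
    by (intro sum_mono e1)
  also have "(\<Sum>j\<in>UNIV. \<gamma> * (\<Sum>i\<in>UNIV. e i * T $ i $ j)) = \<gamma> * (\<Sum>i\<in>UNIV. e i * (\<Sum>j\<in>UNIV. T $ i $ j))"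
    by (simp add: sum_distrib_left sum_distrib_right mult.assoc) (rule sum.swap)
  also have "\<dots> = \<gamma> * (\<Sum>i\<in>UNIV. e i)" by (simp add: T_sum)
  finally have "(1 - \<gamma>) * (\<Sum>j\<in>UNIV. e j) \<ge> 0" by (simp add: algebra_simps)
  moreover have "(\<Sum>j\<in>UNIV. e j) \<le> 0" by (intro sum_nonpos) (simp add: e_def)
  ultimately have "(\<Sum>j\<in>UNIV. e j) = 0" using gamma
    by (smt (verit) mult_pos_neg)
  hence "(\<Sum>j\<in>UNIV. - e j) = 0" by (simp add: sum_negf)
  hence "\<forall>j. - e j = 0" by (subst (asm) sum_nonneg_eq_0_iff) (auto simp: e_def)
  hence e0: "\<And>i. e i = 0" by simp
  have dnn: "d $ i \<ge> 0" for i using e0[of i] by (simp add: e_def min_def split: if_splits)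
  have "(\<Sum>i\<in>UNIV. d $ i * T $ i $ j) \<ge> 0" by (intro sum_nonneg) (simp add: dnn T_nonneg)
  hence "d $ j \<ge> \<mu> j" using eq[of j] gamma by (simp add: )
  thus ?thesis unfolding d_def .
qed

end



lemma young_strict:
  fixes p q a b :: real
  assumes "p > 1" "q > 1" "1/p + 1/q = 1" "a \<ge> 0" "b \<ge> 0" "a powr p \<noteq> b powr q"
  shows "a * b < a powr p / p + b powr q / q"
proof (cases "a = 0 \<or> b = 0")
  case True
  then show ?thesis using assms by (auto simp: powr_def)
next
  case False
  hence a: "a > 0" and b: "b > 0" using assms by auto
  define u where "u = a powr p"
  define v where "v = b powr q"
  define M where "M = u/p + v/q"
  have u: "u > 0" and v: "v > 0" using a b by (auto simp: u_def v_def)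
  have M: "M > 0" unfolding M_def using u v assms by (intro add_pos_pos divide_pos_pos) auto
  have "u \<noteq> M \<or> v \<noteq> M" using assms(3,6) u_def v_def M_def
    by (metis add_divide_distrib divide_divide_eq_right mult.commute nonzero_mult_div_cancel_left
        div_0 less_irrefl)
  have lu: "ln u - ln M \<le> (u - M) / M" by (rule ln_diff_le[OF u M])
  have lv: "ln v - ln M \<le> (v - M) / M" by (rule ln_diff_le[OF v M])
  have s: "(1/p) * (ln u - ln M) + (1/q) * (ln v - ln M) < (1/p) * ((u - M) / M) + (1/q) * ((v - M) / M)"
  proof (cases "u \<noteq> M")
    case True
    have "ln u - ln M < (u - M) / M" by (rule ln_diff_less[OF u M True])
    hence "(1/p) * (ln u - ln M) < (1/p) * ((u - M) / M)" using assms by (intro mult_strict_left_mono) auto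
    moreover have "(1/q) * (ln v - ln M) \<le> (1/q) * ((v - M) / M)"
      using lv assms by (intro mult_left_mono) auto
    ultimately show ?thesis by linarith
  next
    case False
    hence "v \<noteq> M" using \<open>u \<noteq> M \<or> v \<noteq> M\<close> by auto
    have "ln v - ln M < (v - M) / M" by (rule ln_diff_less[OF v M \<open>v \<noteq> M\<close>])
    hence "(1/q) * (ln v - ln M) < (1/q) * ((v - M) / M)" using assms by (intro mult_strict_left_mono) auto
    moreover have "(1/p) * (ln u - ln M) \<le> (1/p) * ((u - M) / M)"
      using lu assms by (intro mult_left_mono) auto
    ultimately show ?thesis by linarith
  qed
  have "(1/p) * ((u - M) / M) + (1/q) * ((v - M) / M) = ((u/p + v/q) - (1/p + 1/q) * M) / M"
    using M assms(1,2) by (simp add: field_simps)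
  also have "\<dots> = 0" using assms(3) M_def by simp
  finally have e: "(1/p) * (ln u - ln M) + (1/q) * (ln v - ln M) < 0" using s by linarith
  hence "(1/p) * ln u + (1/q) * ln v < (1/p + 1/q) * ln M"
    by (simp only: right_diff_distrib distrib_right)
  hence "(1/p) * ln u + (1/q) * ln v < ln M" using assms(3) by simp
  moreover have "(1/p) * ln u = ln a" using a assms(1) by (simp add: u_def ln_powr)
  moreover have "(1/q) * ln v = ln b" using b assms(2) by (simp add: v_def ln_powr)
  ultimately have "ln (a * b) < ln M" using a b by (simp add: ln_mult)
  hence "a * b < M" using a b M by simp
  thus ?thesis by (simp add: M_def u_def v_def)
qed

definition ss :: "('s::finite \<Rightarrow> 'a::finite \<Rightarrow> real) \<Rightarrow> real" where
  "ss f = (\<Sum>s\<in>UNIV. \<Sum>a\<in>UNIV. f s a)"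

lemma ss_add: "ss (\<lambda>s a. f s a + g s a) = ss f + ss g"
  by (simp add: ss_def sum.distrib)
lemma ss_diff: "ss (\<lambda>s a. f s a - g s a) = ss f - ss g"
  by (simp add: ss_def sum_subtractf)
lemma ss_cmult: "ss (\<lambda>s a. c * f s a) = c * ss f"
  by (simp add: ss_def sum_distrib_left)
lemma ss_div: "ss (\<lambda>s a. f s a / c) = ss f / c"
  by (simp add: ss_def sum_divide_distrib)
lemma ss_0[simp]: "ss (\<lambda>s a. 0) = 0"
  by (simp add: ss_def)
lemma ss_mono: "(\<And>s a. f s a \<le> g s a) \<Longrightarrow> ss f \<le> ss g"
  by (simp add: ss_def sum_mono)
lemma ss_ge: "(\<And>s a. 0 \<le> f s a) \<Longrightarrow> f s a \<le> ss f"
proof -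
  assume h: "\<And>s a. 0 \<le> f s a"
  have "f s a \<le> (\<Sum>a\<in>UNIV. f s a)" by (rule member_le_sum) (auto simp: h)
  also have "\<dots> \<le> ss f" unfolding ss_def by (rule member_le_sum) (auto intro: sum_nonneg h)
  finally show ?thesis .
qed
lemma ss_zero: "(\<And>s a. 0 \<le> f s a) \<Longrightarrow> ss f \<le> 0 \<Longrightarrow> f s a = 0"
proof -
  assume h: "\<And>s a. 0 \<le> f s a" and z: "ss f \<le> 0"
  have "\<forall>s\<in>UNIV. (\<Sum>a\<in>UNIV. f s a) = 0"
    using z unfolding ss_def by (subst sum_nonneg_eq_0_iff[symmetric]) (auto intro: sum_nonneg h order.antisym sum_nonneg[of UNIV "\<lambda>s. \<Sum>a\<in>UNIV. f s a"])
  hence "(\<Sum>a\<in>UNIV. f s a) = 0" by simp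
  thus ?thesis using h by (simp add: sum_nonneg_eq_0_iff)
qed

lemma worst_char:
  fixes d Rz :: "'s::finite \<Rightarrow> 'a::finite \<Rightarrow> real" and p \<alpha> :: real
  assumes p: "p > 1" and alpha: "\<alpha> > 0" and dnn: "\<And>s a. d s a \<ge> 0" and dpos: "d sz az > 0"
  defines "q \<equiv> p / (p - 1)"
  defines "N \<equiv> lpnorm q d"
  defines "Rs \<equiv> (\<lambda>s a. Rz s a - \<alpha> * d s a powr (q - 1) / N powr (q - 1))"
  shows "Rs \<in> Rball p Rz \<alpha>"
    and "\<And>R. R \<in> Rball p Rz \<alpha> \<Longrightarrow> ss (\<lambda>s a. d s a * Rs s a) \<le> ss (\<lambda>s a. d s a * R s a)"
    and "\<And>R. R \<in> Rball p Rz \<alpha> \<Longrightarrow> ss (\<lambda>s a. d s a * R s a) \<le> ss (\<lambda>s a. d s a * Rs s a) \<Longrightarrow> R = Rs"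
proof -
  have q1: "q > 1" using p by (simp add: q_def field_simps)
  have pq: "1/p + 1/q = 1" using p by (simp add: q_def field_simps)
  have qp: "(q - 1) * p = q" using p by (simp add: q_def field_simps)
  have qp2: "q / p = q - 1" using p by (simp add: q_def field_simps)
  define S where "S = ss (\<lambda>s a. d s a powr q)"
  have "d sz az powr q \<le> S" unfolding S_def by (rule ss_ge) simp
  hence S: "S > 0" using dpos by (smt (verit) powr_gt_zero)
  have N_eq: "N = S powr (1/q)" unfolding N_def lpnorm_def S_def ss_def using dnn by simp
  have N: "N > 0" using S N_eq by simp
  have Nq: "N powr q = S" using S q1 by (simp add: N_eq powr_powr)
  define b where "b s a = d s a / N" for s a
  have bnn: "b s a \<ge> 0" for s a using dnn N by (simp add: b_def)
  have bq: "b s a powr q = d s a powr q / N powr q" for s a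
    using dnn N by (simp add: b_def powr_divide)
  have sbq: "ss (\<lambda>s a. b s a powr q) = 1" unfolding bq ss_div Nq S_def[symmetric] using S by simp
  define w where "w s a = \<alpha> * b s a powr (q - 1)" for s a
  have w_eq: "\<alpha> * d s a powr (q - 1) / N powr (q - 1) = w s a" for s a
    using dnn N by (simp add: w_def b_def powr_divide)
  have wnn: "w s a \<ge> 0" for s a using alpha by (simp add: w_def)
  have Rs_eq: "Rs = (\<lambda>s a. Rz s a - w s a)" unfolding Rs_def w_eq ..
  have wp: "w s a powr p = \<alpha> powr p * b s a powr q" for s a
    using alpha bnn[of s a] by (simp add: w_def powr_mult powr_powr qp)
  have swp: "ss (\<lambda>s a. w s a powr p) = \<alpha> powr p" unfolding wp ss_cmult sbq by simp
  show "Rs \<in> Rball p Rz \<alpha>"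
  proof -
    have "lpnorm p (\<lambda>s a. Rs s a - Rz s a) = (ss (\<lambda>s a. w s a powr p)) powr (1/p)"
      unfolding lpnorm_def ss_def Rs_eq using wnn by simp
    also have "\<dots> = \<alpha>" using swp alpha p by (simp add: powr_powr)
    finally show ?thesis by (simp add: Rball_def)
  qed
  have bb: "b s a * b s a powr (q - 1) = b s a powr q" for s a
  proof (cases "b s a = 0")
    case True thus ?thesis using q1 by simp
  next
    case False
    hence "b s a > 0" using bnn[of s a] by simp
    thus ?thesis by (simp add: powr_mult_base)
  qed
  have dw: "ss (\<lambda>s a. d s a * w s a) = \<alpha> * N"
  proof -
    have "d s a * w s a = (\<alpha> * N) * (b s a powr q)" for s a
    proof -
      have "d s a = N * b s a" using N by (simp add: b_def)
      hence "d s a * w s a = (\<alpha> * N) * (b s a * b s a powr (q - 1))" by (simp add: w_def mult_ac)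
      thus ?thesis using bb[of s a] by simp
    qed
    thus ?thesis by (simp add: ss_cmult sbq)
  qed
  have dRs: "ss (\<lambda>s a. d s a * Rs s a) = ss (\<lambda>s a. d s a * Rz s a) - \<alpha> * N"
    unfolding Rs_eq right_diff_distrib ss_diff dw ..
  {
    fix R assume R: "R \<in> Rball p Rz \<alpha>"
    define D where "D s a = R s a - Rz s a" for s a
    define L where "L = ss (\<lambda>s a. \<bar>D s a\<bar> powr p)"
    have L0: "L \<ge> 0" unfolding L_def ss_def by (intro sum_nonneg) auto
    have "L powr (1/p) \<le> \<alpha>" using R by (simp add: Rball_def lpnorm_def L_def ss_def D_def)
    hence "(L powr (1/p)) powr p \<le> \<alpha> powr p" using p L0 by (intro powr_mono2) auto
    hence L: "L \<le> \<alpha> powr p" using p L0 by (simp add: powr_powr)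
    define a where "a s t = \<bar>D s t\<bar> / \<alpha>" for s t
    have ann: "a s t \<ge> 0" for s t using alpha by (simp add: a_def)
    have ap: "a s t powr p = \<bar>D s t\<bar> powr p / \<alpha> powr p" for s t
      using alpha by (simp add: a_def powr_divide)
    have sap: "ss (\<lambda>s t. a s t powr p) \<le> 1"
      unfolding ap ss_div L_def[symmetric] using L alpha by simp
    have young: "a s t * b s t \<le> a s t powr p / p + b s t powr q / q" for s t
      by (rule Youngs_inequality) (use p q1 pq ann bnn in auto)
    have dD: "d s t * \<bar>D s t\<bar> = (\<alpha> * N) * (a s t * b s t)" for s t
      using alpha N by (simp add: a_def b_def)
    have sab: "ss (\<lambda>s t. a s t * b s t) \<le> 1"
    proof -
      have "ss (\<lambda>s t. a s t * b s t) \<le> ss (\<lambda>s t. a s t powr p / p + b s t powr q / q)"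
        by (rule ss_mono) (rule young)
      also have "\<dots> = ss (\<lambda>s t. a s t powr p) / p + 1 / q" by (simp add: ss_add ss_div sbq)
      also have "\<dots> \<le> 1 / p + 1 / q" using sap p by (simp add: divide_right_mono)
      finally show ?thesis using pq by simp
    qed
    have sdD: "ss (\<lambda>s t. d s t * \<bar>D s t\<bar>) \<le> \<alpha> * N"
      unfolding dD ss_cmult using sab alpha N by (simp add: mult_left_le)
    have "ss (\<lambda>s t. - (d s t * \<bar>D s t\<bar>)) \<le> ss (\<lambda>s t. d s t * D s t)"
    proof (rule ss_mono)
      fix s t
      have "d s t * (- \<bar>D s t\<bar>) \<le> d s t * D s t" by (rule mult_left_mono) (auto simp: dnn)
      thus "- (d s t * \<bar>D s t\<bar>) \<le> d s t * D s t" by simp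
    qed
    moreover have "ss (\<lambda>s t. - (d s t * \<bar>D s t\<bar>)) = - ss (\<lambda>s t. d s t * \<bar>D s t\<bar>)"
      using ss_cmult[of "-1"] by simp
    ultimately have lowD: "ss (\<lambda>s t. d s t * D s t) \<ge> - (\<alpha> * N)" using sdD by linarith
    have dR: "ss (\<lambda>s t. d s t * R s t) = ss (\<lambda>s t. d s t * Rz s t) + ss (\<lambda>s t. d s t * D s t)"
      unfolding ss_add[symmetric] by (simp add: D_def algebra_simps)
    have "ss (\<lambda>s a. d s a * Rs s a) \<le> ss (\<lambda>s a. d s a * R s a)"
      using dR dRs lowD by linarith
    moreover
    {
      assume le: "ss (\<lambda>s a. d s a * R s a) \<le> ss (\<lambda>s a. d s a * Rs s a)"
      hence upD: "ss (\<lambda>s t. d s t * D s t) \<le> - (\<alpha> * N)" using dR dRs by linarith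
      have sum0: "ss (\<lambda>s t. d s t * \<bar>D s t\<bar> + d s t * D s t) \<le> 0"
        unfolding ss_add using upD sdD by linarith
      have sign: "d s t * \<bar>D s t\<bar> + d s t * D s t = 0" for s t
      proof (rule ss_zero[OF _ sum0])
        fix s t
        have "0 \<le> d s t * (\<bar>D s t\<bar> + D s t)" by (rule mult_nonneg_nonneg) (auto simp: dnn)
        thus "0 \<le> d s t * \<bar>D s t\<bar> + d s t * D s t" by (simp add: distrib_left)
      qed
      have "\<alpha> * N \<le> ss (\<lambda>s t. d s t * \<bar>D s t\<bar>)"
        using sign upD ss_add[of "\<lambda>s t. d s t * \<bar>D s t\<bar>" "\<lambda>s t. d s t * D s t"] by simp
      hence "\<alpha> * N \<le> (\<alpha> * N) * ss (\<lambda>s t. a s t * b s t)" unfolding dD ss_cmult .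
      hence sab1: "1 \<le> ss (\<lambda>s t. a s t * b s t)" using alpha N by simp
      have gap0: "ss (\<lambda>s t. a s t powr p / p + b s t powr q / q - a s t * b s t) \<le> 0"
      proof -
        have "ss (\<lambda>s t. a s t powr p / p + b s t powr q / q - a s t * b s t)
           = ss (\<lambda>s t. a s t powr p) / p + 1 / q - ss (\<lambda>s t. a s t * b s t)"
          by (simp add: ss_diff ss_add ss_div sbq)
        also have "\<dots> \<le> 1 / p + 1 / q - 1"
        proof -
          have "ss (\<lambda>s t. a s t powr p) / p \<le> 1 / p" using sap p by (simp add: divide_right_mono)
          thus ?thesis using sab1 by linarith
        qed
        finally show ?thesis using pq by simp
      qed
      have eqab: "a s t powr p = b s t powr q" for s t
      proof (rule ccontr)
        assume "a s t powr p \<noteq> b s t powr q"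
        hence "a s t * b s t < a s t powr p / p + b s t powr q / q"
          by (intro young_strict) (use p q1 pq ann bnn in auto)
        moreover have "a s t powr p / p + b s t powr q / q - a s t * b s t = 0"
          by (rule ss_zero[OF _ gap0]) (use young in auto)
        ultimately show False by simp
      qed
      have aw: "\<bar>D s t\<bar> = w s t" for s t
      proof -
        have "a s t = (a s t powr p) powr (1/p)" using p ann[of s t] by (simp add: powr_powr)
        also have "\<dots> = b s t powr (q - 1)" unfolding eqab using bnn[of s t] p by (simp add: powr_powr qp2)
        finally show ?thesis using alpha by (simp add: a_def w_def field_simps)
      qed
      have "R = Rs"
      proof (intro ext)
        fix s t
        show "R s t = Rs s t"
        proof (cases "d s t = 0")
          case True
          hence "w s t = 0" using q1 by (simp add: w_def b_def)
          thus ?thesis using aw[of s t] by (simp add: Rs_eq D_def)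
        next
          case False
          hence "d s t > 0" using dnn[of s t] by simp
          moreover have "d s t * (\<bar>D s t\<bar> + D s t) = 0" using sign[of s t] by (simp add: distrib_left)
          ultimately have "\<bar>D s t\<bar> + D s t = 0" by simp
          hence "D s t = - w s t" using aw[of s t] by linarith
          thus ?thesis by (simp add: Rs_eq D_def)
        qed
      qed
    }
    ultimately have "ss (\<lambda>s a. d s a * Rs s a) \<le> ss (\<lambda>s a. d s a * R s a) \<and>
      (ss (\<lambda>s a. d s a * R s a) \<le> ss (\<lambda>s a. d s a * Rs s a) \<longrightarrow> R = Rs)" by blast
  }
  thus "\<And>R. R \<in> Rball p Rz \<alpha> \<Longrightarrow> ss (\<lambda>s a. d s a * Rs s a) \<le> ss (\<lambda>s a. d s a * R s a)"
    and "\<And>R. R \<in> Rball p Rz \<alpha> \<Longrightarrow> ss (\<lambda>s a. d s a * R s a) \<le> ss (\<lambda>s a. d s a * Rs s a) \<Longrightarrow> R = Rs"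
    by blast+
qed



theorem theorem2:
  fixes P :: "'s::finite \<Rightarrow> 'a::finite \<Rightarrow> 's \<Rightarrow> real"
    and pol :: "'s \<Rightarrow> 'a \<Rightarrow> real"
    and \<mu> :: "'s \<Rightarrow> real"
    and R0 :: "'s \<Rightarrow> 'a \<Rightarrow> real"
    and \<gamma> p \<alpha> :: real
    and v :: "nat \<Rightarrow> real^'s"
  assumes P_nonneg: "\<And>s a s'. P s a s' \<ge> 0"
    and P_sum: "\<And>s a. (\<Sum>s'\<in>UNIV. P s a s') = 1"
    and pol_nonneg: "\<And>s a. pol s a \<ge> 0"
    and pol_sum: "\<And>s. (\<Sum>a\<in>UNIV. pol s a) = 1"
    and mu_pos: "\<And>s. \<mu> s > 0"
    and mu_sum: "(\<Sum>s\<in>UNIV. \<mu> s) = 1"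
    and gamma: "0 \<le> \<gamma>" "\<gamma> < 1"
    and p: "1 < p"
    and alpha: "\<alpha> > 0"
    and iter: "\<And>n. v (Suc n) = reg_bellman \<gamma> P \<mu> pol p R0 \<alpha> (v n)"
  shows "(\<exists>c. 0 \<le> c \<and> c < 1 \<and>
           (\<forall>n. supnorm (v (Suc n) - robust_value \<gamma> P \<mu> pol p R0 \<alpha>)
                 \<le> c * supnorm (v n - robust_value \<gamma> P \<mu> pol p R0 \<alpha>))) \<and>
         v \<longlonglongrightarrow> robust_value \<gamma> P \<mu> pol p R0 \<alpha>"
proof -
  interpret stoch P pol \<gamma> \<mu>
    by unfold_locales (use assms in auto)
  define d where "d = occ \<gamma> P \<mu> pol"
  have dnn: "d s a \<ge> 0" for s a
    unfolding d_def occ_def using occ_ge_mu[of s] mu_pos[of s] pol_nonneg[of s a] by simp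
  obtain s0 :: 's where True by simp
  have "\<exists>a0. pol s0 a0 > 0"
  proof (rule ccontr)
    assume "\<not> ?thesis"
    hence "\<And>a. pol s0 a = 0" using pol_nonneg by (metis less_eq_real_def)
    thus False using pol_sum[of s0] by simp
  qed
  then obtain a0 where a0: "pol s0 a0 > 0" by blast
  have dpos: "d s0 a0 > 0"
    unfolding d_def occ_def using occ_ge_mu[of s0] mu_pos[of s0] a0 by simp
  define q where "q = p / (p - 1)"
  define N where "N = lpnorm q d"
  define Rs where "Rs = (\<lambda>s a. R0 s a - \<alpha> * d s a powr (q - 1) / N powr (q - 1))"
  have wc1: "Rs \<in> Rball p R0 \<alpha>"
    unfolding Rs_def N_def q_def by (rule worst_char(1)[where d=d and sz=s0 and az=a0, OF p alpha dnn dpos])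
  have wc2: "ss (\<lambda>s a. d s a * Rs s a) \<le> ss (\<lambda>s a. d s a * R s a)" if "R \<in> Rball p R0 \<alpha>" for R
    unfolding Rs_def N_def q_def by (rule worst_char(2)[where d=d and sz=s0 and az=a0, OF p alpha dnn dpos that])
  have wc3: "R = Rs" if "R \<in> Rball p R0 \<alpha>" "ss (\<lambda>s a. d s a * R s a) \<le> ss (\<lambda>s a. d s a * Rs s a)" for R
    using that unfolding Rs_def N_def q_def by (rule worst_char(3)[where d=d and sz=s0 and az=a0, OF p alpha dnn dpos])
  have ret_eq: "ret \<gamma> P \<mu> pol R = ss (\<lambda>s a. d s a * R s a)" for R
    by (simp add: ret_def ss_def d_def)
  have W: "worst_reward \<gamma> P \<mu> pol p R0 \<alpha> = Rs"
    unfolding worst_reward_def ret_eq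
  proof (rule the_equality)
    show "Rs \<in> Rball p R0 \<alpha> \<and> (\<forall>R'\<in>Rball p R0 \<alpha>. ss (\<lambda>s a. d s a * Rs s a) \<le> ss (\<lambda>s a. d s a * R' s a))"
      by (intro conjI ballI wc1 wc2)
  next
    fix R assume "R \<in> Rball p R0 \<alpha> \<and> (\<forall>R'\<in>Rball p R0 \<alpha>. ss (\<lambda>s a. d s a * R s a) \<le> ss (\<lambda>s a. d s a * R' s a))"
    hence h1: "R \<in> Rball p R0 \<alpha>" and h2: "ss (\<lambda>s a. d s a * R s a) \<le> ss (\<lambda>s a. d s a * Rs s a)"
      using wc1 by auto
    show "R = Rs" by (rule wc3[OF h1 h2])
  qed
  have RB: "reg_bellman \<gamma> P \<mu> pol p R0 \<alpha> x = bellman \<gamma> P pol Rs x" for x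
  proof -
    have "(\<Sum>a\<in>UNIV. pol s a * Rs s a) = (\<Sum>a\<in>UNIV. pol s a * R0 s a)
        - \<alpha> * (\<Sum>a\<in>UNIV. pol s a * d s a powr (q - 1)) / N powr (q - 1)" for s
      unfolding Rs_def by (simp add: right_diff_distrib sum_subtractf sum_distrib_left sum_divide_distrib mult_ac)
    note eq = this
    have "reg_bellman \<gamma> P \<mu> pol p R0 \<alpha> x = (\<chi> s. \<Sum>a\<in>UNIV. pol s a * R0 s a) + \<gamma> *\<^sub>R (T *v x)
       - (\<chi> s. \<alpha> * (\<Sum>a\<in>UNIV. pol s a * d s a powr (q - 1)) / N powr (q - 1))"
      unfolding reg_bellman_def bellman_def reward_pol_def Let_def d_def[symmetric] q_def[symmetric] N_def[symmetric] ..
    also have "\<dots> = bellman \<gamma> P pol Rs x"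
      unfolding bellman_def reward_pol_def by (simp add: vec_eq_iff eq)
    finally show ?thesis .
  qed
  define V where "V = robust_value \<gamma> P \<mu> pol p R0 \<alpha>"
  have VF: "bellman \<gamma> P pol Rs V = V"
    unfolding V_def robust_value_def W by (rule value_fix)
  have contr: "supnorm (v (Suc n) - V) \<le> \<gamma> * supnorm (v n - V)" for n
  proof -
    have "v (Suc n) - V = \<gamma> *\<^sub>R (T *v (v n - V))"
      using bellman_diff[of Rs "v n" V] unfolding iter RB VF .
    thus ?thesis using T_contr by simp
  qed
  have pw: "supnorm (v n - V) \<le> \<gamma> ^ n * supnorm (v 0 - V)" for n
  proof (induction n)
    case 0 thus ?case by simp
  next
    case (Suc n)
    have "supnorm (v (Suc n) - V) \<le> \<gamma> * supnorm (v n - V)" by (rule contr)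
    also have "\<dots> \<le> \<gamma> * (\<gamma> ^ n * supnorm (v 0 - V))" using Suc gamma by (intro mult_left_mono) auto
    finally show ?case by (simp add: mult_ac)
  qed
  have nb: "norm (v n - V) \<le> real CARD('s) * (\<gamma> ^ n * supnorm (v 0 - V))" for n
  proof -
    have "norm (v n - V) \<le> (\<Sum>i\<in>UNIV. \<bar>(v n - V) $ i\<bar>)" by (rule norm_le_l1_cart)
    also have "\<dots> \<le> (\<Sum>i\<in>(UNIV::'s set). supnorm (v n - V))" by (intro sum_mono supnorm_ge)
    also have "\<dots> = real CARD('s) * supnorm (v n - V)" by simp
    also have "\<dots> \<le> real CARD('s) * (\<gamma> ^ n * supnorm (v 0 - V))" using pw by (intro mult_left_mono) auto
    finally show ?thesis .
  qed
  have ng: "norm \<gamma> < 1" using gamma by simp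
  have g0: "(\<lambda>n. real CARD('s) * (\<gamma> ^ n * supnorm (v 0 - V))) \<longlonglongrightarrow> 0"
    by (intro tendsto_mult_right_zero tendsto_mult_left_zero LIMSEQ_power_zero ng)
  have "(\<lambda>n. v n - V) \<longlonglongrightarrow> 0"
    by (rule Lim_null_comparison[OF always_eventually g0]) (use nb in blast)
  from tendsto_add[OF this tendsto_const[of V]]
  have lim: "v \<longlonglongrightarrow> V" by simp
  have ex: "\<exists>c. 0 \<le> c \<and> c < 1 \<and> (\<forall>n. supnorm (v (Suc n) - V) \<le> c * supnorm (v n - V))"
    by (rule exI[of _ \<gamma>]) (use contr gamma in blast)
  show ?thesis unfolding V_def[symmetric] using ex lim by (rule conjI)
qed

end
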